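(* Let $(a_n)_{\mathrm c}\in\widetilde{\mathbb C}_{\mathrm c}$ and $c\in\widetilde{\mathbb C}$. Then there exists $q\in\mathbb N$ such that $B_{\mathrm d\rho^q}(c)\subseteq S((a_n)_{\mathrm c},c)$.
   Context: Fix $I=(0,1]$ and a gauge $\rho=(\rho_\varepsilon)_{\varepsilon\in I}$ with $\rho_\varepsilon\in I$ and $\rho_\varepsilon\to0$ as $\varepsilon\to0$. "$\forall^0\varepsilon$" means "for all sufficiently small $\varepsilon\in I$". A net $(x_\varepsilon)\in\mathbb C^I$ is $\rho$-moderate ($(x_\varepsilon)\in\mathbb C_\rho$) if $\exists N\in\mathbb N\,\forall^0\varepsilon:|x_\varepsilon|\le\rho_\varepsilon^{-N}$, and $\rho$-negligible if $\forall q\in\mathbb N\,\forall^0\varepsilon:|x_\varepsilon|\le\rho_\varepsilon^q$. $\widetilde{\mathbb C}:=\mathbb C_\rho/\{\text{negligible nets}\}$ with classes $[x_\varepsilon]$; $\widetilde{\mathbb R}\subseteq\widetilde{\mathbb C}$ consists of classes of real moderate nets; $\mathrm d\rho:=[\rho_\varepsilon]$, $|[z_\varepsilon]|:=[|z_\varepsilon|]$. On $\widetilde{\mathbb R}$: $[x_\varepsilon]\le[y_\varepsilon]$ iff $x_\varepsilon\le y_\varepsilon+z_\varepsilon$ $\forall^0\varepsilon$ for some negligible $(z_\varepsilon)$; $x<y$ iff $\exists m\,\forall^0\varepsilon:y_\varepsilon-x_\varepsilon>\rho_\varepsilon^m$; $\widetilde{\mathbb R}_{>0}:=\{x:x>0\}$.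 $B_r(c):=\{z\in\widetilde{\mathbb C}:|z-c|<r\}$ for $r\in\widetilde{\mathbb R}_{>0}$ (these balls generate the sharp topology). Hypernatural numbers: $\widetilde{\mathbb N}:=\{[n_\varepsilon]\in\widetilde{\mathbb R}:n_\varepsilon\in\mathbb N\ \forall\varepsilon\}$; for each $N\in\widetilde{\mathbb N}$ a representative $(\mathrm{ni}(N)_\varepsilon)$ with all $\mathrm{ni}(N)_\varepsilon\in\mathbb N$ is fixed. Hyperlimit: $l=\lim_{n\in\widetilde{\mathbb N}}a_n$ means $\forall q\,\exists M\in\widetilde{\mathbb N}\,\forall n\in\widetilde{\mathbb N}:n\ge M\Rightarrow|a_n-l|<\mathrm d\rho^q$. Hyperseries: a net $(a_{n\varepsilon})_{n\in\mathbb N,\varepsilon\in I}$ is moderate over hypersums if for every $N\in\widetilde{\mathbb N}$ the net $(\sum_{n=0}^{\mathrm{ni}(N)_\varepsilon}a_{n\varepsilon})_\varepsilon$ is $\rho$-moderate; two such nets are equivalent if for all $N,M\in\widetilde{\mathbb N}$ the net $(\sum_{n=\mathrm{ni}(N)_\varepsilon}^{\mathrm{ni}(M)_\varepsilon}(a_{n\varepsilon}-\bar a_{n\varepsilon}))_\varepsilon$ is negligible; the quotient is $\widetilde{\mathbb C}_{\mathrm s}$ with classes $[a_{n\varepsilon}]_{\mathrm s}$. $\sum_{n=N}^Ma_n:=[\sum_{n=\mathrm{ni}(N)_\varepsilon}^{\mathrm{ni}(M)_\varepsilon}a_{n\varepsilon}]$, and $\sum_{n\in\widetilde{\mathbb N}}a_n:=\lim_{N\in\widetilde{\mathbb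 N}}\sum_{n=0}^Na_n$ when this hyperlimit exists (convergence). Coefficients: $\widetilde{\mathbb C}_{\mathrm c}$ is the set of weakly $\rho$-moderate nets $(a_{n\varepsilon})$ ($\exists Q,R\in\mathbb N\,\forall^0\varepsilon\,\forall n\in\mathbb N:|a_{n\varepsilon}|\le\rho_\varepsilon^{-nQ-R}$) modulo strong equivalence ($\forall q,r\,\forall^0\varepsilon\,\forall n:|a_{n\varepsilon}-\bar a_{n\varepsilon}|\le\rho_\varepsilon^{nq+r}$), classes $(a_n)_{\mathrm c}=[a_{n\varepsilon}]_{\mathrm c}$. $\widetilde{\mathbb R}_\infty:=(\mathbb R\cup\{\pm\infty\})^I/\sim_\rho$ (same negligibility relation), ordered by $x\le y$ iff some representatives satisfy $x_\varepsilon\le y_\varepsilon$ $\forall^0\varepsilon$, and for $x\in\widetilde{\mathbb R}$, $x<y$ iff $\exists m\,\forall^0\varepsilon:y_\varepsilon>x_\varepsilon+\rho_\varepsilon^m$. Radius: $\mathrm{rad}(a_n)_{\mathrm c}:=[(\limsup_n|a_{n\varepsilon}|^{1/n})^{-1}]\in\widetilde{\mathbb R}_\infty$. Set of convergence: $S((a_n)_{\mathrm c},c)$ is the set of $z\in\widetilde{\mathbb C}$ with $|z-c|<\mathrm{rad}(a_n)_{\mathrm c}$ for which there exist representatives $z=[z_\varepsilon]$, $c=[c_\varepsilon]$, $(a_n)_{\mathrm c}=[a_{n\varepsilon}]_{\mathrm c}$ such that: (a) the net $(a_{n\varepsilon}(z_\varepsilon-c_\varepsilon)^n)_{n,\varepsilon}$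 is moderate over hypersums (its class $(a_n(z-c)^n)_n\in\widetilde{\mathbb C}_{\mathrm s}$ is called a formal hyperpower series); (b) the hyperseries $\sum_{n\in\widetilde{\mathbb N}}a_n(z-c)^n$ converges and equals $[\sum_{n=0}^{\infty}a_{n\varepsilon}(z_\varepsilon-c_\varepsilon)^n]$ (these ordinary series converging for small $\varepsilon$ to a moderate net); (c) for every representative $z=[\hat z_\varepsilon]$, the net $(\sum_{n\ge1}na_{n\varepsilon}(\hat z_\varepsilon-c_\varepsilon)^{n-1})_\varepsilon$ (derivative of the $\varepsilon$-wise power series at $\hat z_\varepsilon$) is $\rho$-moderate. *)

theory Defs
  imports Complex_Main "HOL-Library.Extended_Real" "HOL-Library.Liminf_Limsup"
begin

(* Nets indexed by eps in I = (0,1] are functions real => _ ; only small eps matter.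
   "for all sufficiently small eps" is rendered as eventually at_right 0. *)

definition rho_gauge :: "(real \<Rightarrow> real) \<Rightarrow> bool" where
  "rho_gauge \<rho> \<longleftrightarrow> (\<forall>e\<in>{0<..1}. \<rho> e \<in> {0<..1}) \<and> (\<rho> \<longlongrightarrow> 0) (at_right 0)"

definition rmod :: "(real \<Rightarrow> real) \<Rightarrow> (real \<Rightarrow> 'a::real_normed_vector) \<Rightarrow> bool" where
  "rmod \<rho> x \<longleftrightarrow> (\<exists>N::nat. \<forall>\<^sub>F e in at_right 0. norm (x e) \<le> inverse (\<rho> e ^ N))"

definition rneg :: "(real \<Rightarrow> real) \<Rightarrow> (real \<Rightarrow> 'a::real_normed_vector) \<Rightarrow> bool" where
  "rneg \<rho> x \<longleftrightarrow> (\<forall>q::nat. \<forall>\<^sub>F e in at_right 0. norm (x e) \<le> \<rho> e ^ q)"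

definition req :: "(real \<Rightarrow> real) \<Rightarrow> (real \<Rightarrow> 'a::real_normed_vector) \<Rightarrow> (real \<Rightarrow> 'a) \<Rightarrow> bool" where
  "req \<rho> x y \<longleftrightarrow> rneg \<rho> (\<lambda>e. x e - y e)"

definition rle :: "(real \<Rightarrow> real) \<Rightarrow> (real \<Rightarrow> real) \<Rightarrow> (real \<Rightarrow> real) \<Rightarrow> bool" where
  "rle \<rho> x y \<longleftrightarrow> (\<exists>w. rneg \<rho> w \<and> (\<forall>\<^sub>F e in at_right 0. x e \<le> y e + w e))"

definition rlt :: "(real \<Rightarrow> real) \<Rightarrow> (real \<Rightarrow> real) \<Rightarrow> (real \<Rightarrow> real) \<Rightarrow> bool" where
  "rlt \<rho> x y \<longleftrightarrow> (\<exists>m::nat. \<forall>\<^sub>F e in at_right 0. y e - x e > \<rho> e ^ m)"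

(* strict order x < y for x in R~ and y in R~_infinity *)
definition rlt_ext :: "(real \<Rightarrow> real) \<Rightarrow> (real \<Rightarrow> real) \<Rightarrow> (real \<Rightarrow> ereal) \<Rightarrow> bool" where
  "rlt_ext \<rho> x y \<longleftrightarrow> (\<exists>m::nat. \<forall>\<^sub>F e in at_right 0. y e > ereal (x e + \<rho> e ^ m))"

(* a natural-valued net representing a hypernatural number *)
definition hypernat :: "(real \<Rightarrow> real) \<Rightarrow> (real \<Rightarrow> nat) \<Rightarrow> bool" where
  "hypernat \<rho> N \<longleftrightarrow> rmod \<rho> (\<lambda>e. real (N e))"

(* hyperlimit of a map from hypernaturals (given by natural-valued representatives) *)
definition hyperlim :: "(real \<Rightarrow> real) \<Rightarrow> ((real \<Rightarrow> nat) \<Rightarrow> real \<Rightarrow> complex) \<Rightarrow> (real \<Rightarrow> complex) \<Rightarrow> bool" where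
  "hyperlim \<rho> s l \<longleftrightarrow> (\<forall>q::nat. \<exists>M. hypernat \<rho> M \<and>
      (\<forall>N. hypernat \<rho> N \<and> rle \<rho> (\<lambda>e. real (M e)) (\<lambda>e. real (N e)) \<longrightarrow>
           rlt \<rho> (\<lambda>e. cmod (s N e - l e)) (\<lambda>e. \<rho> e ^ q)))"

definition hypersum :: "(nat \<Rightarrow> real \<Rightarrow> complex) \<Rightarrow> (real \<Rightarrow> nat) \<Rightarrow> real \<Rightarrow> complex" where
  "hypersum b N = (\<lambda>e. \<Sum>n\<le>N e. b n e)"

definition hypersum_moderate :: "(real \<Rightarrow> real) \<Rightarrow> (nat \<Rightarrow> real \<Rightarrow> complex) \<Rightarrow> bool" where
  "hypersum_moderate \<rho> b \<longleftrightarrow> (\<forall>N. hypernat \<rho> N \<longrightarrow> rmod \<rho> (hypersum b N))"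

definition weakly_moderate :: "(real \<Rightarrow> real) \<Rightarrow> (nat \<Rightarrow> real \<Rightarrow> complex) \<Rightarrow> bool" where
  "weakly_moderate \<rho> a \<longleftrightarrow> (\<exists>Q R::nat. \<forall>\<^sub>F e in at_right 0. \<forall>n.
      cmod (a n e) \<le> inverse (\<rho> e ^ (n * Q + R)))"

definition strong_eq :: "(real \<Rightarrow> real) \<Rightarrow> (nat \<Rightarrow> real \<Rightarrow> complex) \<Rightarrow> (nat \<Rightarrow> real \<Rightarrow> complex) \<Rightarrow> bool" where
  "strong_eq \<rho> a b \<longleftrightarrow> (\<forall>q r::nat. \<forall>\<^sub>F e in at_right 0. \<forall>n.
      cmod (a n e - b n e) \<le> \<rho> e ^ (n * q + r))"

definition rad :: "(nat \<Rightarrow> real \<Rightarrow> complex) \<Rightarrow> real \<Rightarrow> ereal" where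
  "rad a = (\<lambda>e. inverse (limsup (\<lambda>n. ereal (root n (cmod (a n e))))))"

(* set of convergence S((a_n)_c, c), as a set of representatives *)
definition conv_set :: "(real \<Rightarrow> real) \<Rightarrow> (nat \<Rightarrow> real \<Rightarrow> complex) \<Rightarrow> (real \<Rightarrow> complex) \<Rightarrow> (real \<Rightarrow> complex) set" where
  "conv_set \<rho> a c = {z. rmod \<rho> z \<and> rlt_ext \<rho> (\<lambda>e. cmod (z e - c e)) (rad a) \<and>
     (\<exists>z' c' a'. rmod \<rho> z' \<and> req \<rho> z' z \<and> rmod \<rho> c' \<and> req \<rho> c' c \<and>
        weakly_moderate \<rho> a' \<and> strong_eq \<rho> a' a \<and>
        hypersum_moderate \<rho> (\<lambda>n e. a' n e * (z' e - c' e) ^ n) \<and>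
        (\<forall>\<^sub>F e in at_right 0. summable (\<lambda>n. a' n e * (z' e - c' e) ^ n)) \<and>
        rmod \<rho> (\<lambda>e. \<Sum>n. a' n e * (z' e - c' e) ^ n) \<and>
        hyperlim \<rho> (hypersum (\<lambda>n e. a' n e * (z' e - c' e) ^ n))
                   (\<lambda>e. \<Sum>n. a' n e * (z' e - c' e) ^ n) \<and>
        (\<forall>zh. rmod \<rho> zh \<and> req \<rho> zh z \<longrightarrow>
           (\<forall>\<^sub>F e in at_right 0. summable (\<lambda>n. of_nat (Suc n) * a' (Suc n) e * (zh e - c' e) ^ n)) \<and>
           rmod \<rho> (\<lambda>e. \<Sum>n. of_nat (Suc n) * a' (Suc n) e * (zh e - c' e) ^ n)))}"

(* sharp ball B_r(c), as a set of representatives *)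
definition sball :: "(real \<Rightarrow> real) \<Rightarrow> (real \<Rightarrow> real) \<Rightarrow> (real \<Rightarrow> complex) \<Rightarrow> (real \<Rightarrow> complex) set" where
  "sball \<rho> r c = {z. rmod \<rho> z \<and> rlt \<rho> (\<lambda>e. cmod (z e - c e)) r}"

end

theory Submission
  imports Defs
begin

lemma suc_le_pow2: "Suc n \<le> 2 ^ n"
  by (induction n) auto

lemma nr_le1:
  fixes r :: real assumes "0 < r" "r \<le> 1/2"
  shows "real (Suc n) * r ^ n \<le> 1"
proof -
  have "r ^ n \<le> (1/2) ^ n" using assms by (intro power_mono) auto
  moreover have "real (Suc n) \<le> 2 ^ n" using suc_le_pow2[of n]
    by (metis numeral_power_eq_of_nat_cancel_iff of_nat_le_iff)
  ultimately have "real (Suc n) * r ^ n \<le> 2 ^ n * (1/2)^n"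
    using assms by (intro mult_mono) auto
  also have "\<dots> = 1" by (simp add: power_mult_distrib[symmetric])
  finally show ?thesis .
qed

lemma core1:
  fixes r :: real and a :: "nat \<Rightarrow> complex" and x :: complex
  assumes r: "0 < r" "r \<le> 1" and A: "\<And>n. cmod (a n) \<le> inverse (r ^ (n * Q + R))"
    and x: "cmod x \<le> r ^ (Q + 2)"
  shows "cmod (a n * x ^ n) \<le> inverse (r ^ R) * r ^ n"
proof -
  have "cmod (a n * x ^ n) = cmod (a n) * cmod x ^ n" by (simp add: norm_mult norm_power)
  also have "\<dots> \<le> inverse (r ^ (n * Q + R)) * (r ^ (Q + 2)) ^ n"
    using A[of n] x r by (intro mult_mono power_mono) auto
  also have "\<dots> = inverse (r ^ R) * r ^ n * r ^ n"
    using r by (simp add: power_add power_mult field_simps mult.commute)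
  also have "\<dots> \<le> inverse (r ^ R) * r ^ n * 1"
    using r by (intro mult_left_mono power_le_one) auto
  finally show ?thesis by simp
qed

lemma core2:
  fixes r :: real and a :: "nat \<Rightarrow> complex" and x :: complex
  assumes r: "0 < r" "r \<le> 1/2" and A: "\<And>n. cmod (a n) \<le> inverse (r ^ (n * Q + R))"
    and x: "cmod x \<le> r ^ (Q + 2)"
  shows "cmod (of_nat (Suc n) * a (Suc n) * x ^ n) \<le> inverse (r ^ (Q + R)) * r ^ n"
proof -
  have "cmod (of_nat (Suc n) * a (Suc n) * x ^ n) = real (Suc n) * cmod (a (Suc n)) * cmod x ^ n"
    by (simp add: norm_mult norm_power del: of_nat_Suc)
  also have "\<dots> \<le> real (Suc n) * inverse (r ^ (Suc n * Q + R)) * (r ^ (Q + 2)) ^ n"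
    using A[of "Suc n"] x r by (intro mult_mono power_mono mult_left_mono) auto
  also have "\<dots> = inverse (r ^ (Q + R)) * r ^ n * (real (Suc n) * r ^ n)"
    using r by (simp add: power_add power_mult field_simps mult.commute)
  also have "\<dots> \<le> inverse (r ^ (Q + R)) * r ^ n * 1"
    using r nr_le1[of r n] by (intro mult_left_mono) auto
  finally show ?thesis by simp
qed

lemma geo:
  fixes f :: "nat \<Rightarrow> complex" and r C :: real
  assumes r: "0 < r" "r \<le> 1/2" and C: "0 \<le> C" and B: "\<And>n. cmod (f n) \<le> C * r ^ n"
  shows "summable f" "cmod (suminf f) \<le> 2 * C" "cmod (\<Sum>n\<le>N. f n) \<le> 2 * C"
    "cmod (suminf f - (\<Sum>n\<le>N. f n)) \<le> 2 * C * r ^ Suc N"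
proof -
  have sg: "summable (\<lambda>n. C * r ^ n)" using r by (intro summable_mult summable_geometric) auto
  have sgv: "(\<Sum>n. C * r ^ n) = C / (1 - r)" using r by (simp add: suminf_mult suminf_geometric)
  have cr: "C * (r * 2) \<le> C * 1" using r C by (intro mult_left_mono) auto
  have c2: "C / (1 - r) \<le> 2 * C" using r C cr by (simp add: field_simps)
  show sf: "summable f" by (rule summable_comparison_test'[OF sg]) (rule B)
  show "cmod (suminf f) \<le> 2 * C"
    using norm_suminf_le[of f "\<lambda>n. C * r ^ n", OF B sg] sgv c2 by simp
  have "cmod (\<Sum>n\<le>N. f n) \<le> (\<Sum>n\<le>N. C * r ^ n)"
    by (rule order.trans[OF norm_sum sum_mono[OF B]])
  also have "\<dots> \<le> (\<Sum>n. C * r ^ n)"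
    using sg r C by (intro sum_le_suminf) auto
  finally show "cmod (\<Sum>n\<le>N. f n) \<le> 2 * C" using sgv c2 by simp
  have "suminf f - (\<Sum>n\<le>N. f n) = (\<Sum>n. f (n + Suc N))"
    using suminf_split_initial_segment[OF sf, of "Suc N"] by (simp add: lessThan_Suc_atMost)
  also have "cmod \<dots> \<le> (\<Sum>n. C * r ^ Suc N * r ^ n)"
  proof (rule norm_suminf_le)
    fix n show "cmod (f (n + Suc N)) \<le> C * r ^ Suc N * r ^ n"
      using B[of "n + Suc N"] by (simp add: power_add mult_ac)
    show "summable (\<lambda>n. C * r ^ Suc N * r ^ n)" using r by (intro summable_mult summable_geometric) auto
  qed
  also have "\<dots> = C * r ^ Suc N / (1 - r)" using r by (simp add: suminf_mult suminf_geometric)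
  also have "\<dots> \<le> 2 * C * r ^ Suc N"
  proof -
    have "C * r ^ Suc N * (r * 2) \<le> C * r ^ Suc N * 1" using r C by (intro mult_left_mono) auto
    then show ?thesis using r C by (simp add: field_simps)
  qed
  finally show "cmod (suminf f - (\<Sum>n\<le>N. f n)) \<le> 2 * C * r ^ Suc N" .
qed

lemma rad_bound:
  fixes r :: real and a :: "nat \<Rightarrow> complex"
  assumes r: "0 < r" "r \<le> 1" and A: "\<And>n. cmod (a n) \<le> inverse (r ^ (n * Q + R))"
  shows "ereal (r ^ (Q + R)) \<le> inverse (limsup (\<lambda>n. ereal (root n (cmod (a n)))))"
proof -
  have b: "root n (cmod (a n)) \<le> inverse (r ^ (Q + R))" for n
  proof (cases n)
    case 0 then show ?thesis using r by simp
  next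
    case (Suc m)
    have "cmod (a n) \<le> inverse (r ^ (n * Q + R))" by (rule A)
    also have "\<dots> \<le> inverse (r ^ (n * (Q + R)))"
      using r Suc by (intro le_imp_inverse_le power_decreasing) (auto simp: algebra_simps)
    also have "\<dots> = inverse (r ^ (Q + R)) ^ n" by (metis power_mult mult.commute power_inverse)
    finally have "root n (cmod (a n)) \<le> root n (inverse (r ^ (Q + R)) ^ n)"
      using Suc by (intro real_root_le_mono) auto
    also have "\<dots> = inverse (r ^ (Q + R))" by (rule real_root_power_cancel) (use Suc r in auto)
    finally show ?thesis .
  qed
  have L: "limsup (\<lambda>n. ereal (root n (cmod (a n)))) \<le> ereal (inverse (r ^ (Q + R)))"
    by (rule Limsup_bounded) (use b in auto)
  have L0: "0 \<le> limsup (\<lambda>n. ereal (root n (cmod (a n))))"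
    by (rule le_Limsup) (auto intro!: always_eventually real_root_ge_zero)
  show ?thesis
  proof (cases "limsup (\<lambda>n. ereal (root n (cmod (a n)))) = 0")
    case True then show ?thesis by simp
  next
    case False
    then have "0 < limsup (\<lambda>n. ereal (root n (cmod (a n))))" using L0 by simp
    then have "inverse (ereal (inverse (r ^ (Q + R)))) \<le> inverse (limsup (\<lambda>n. ereal (root n (cmod (a n)))))"
      using L by (intro ereal_inverse_antimono) auto
    then show ?thesis using r by simp
  qed
qed

lemma pw:
  fixes r :: real assumes "0 < r" "r \<le> 1/4"
  shows "2 * r ^ (Suc k) \<le> r ^ k"
proof -
  have "2 * r ^ Suc k = r ^ k * (2 * r)" by (simp add: mult_ac)
  also have "\<dots> \<le> r ^ k * 1" using assms by (intro mult_left_mono) auto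
  finally show ?thesis by simp
qed

lemma pinv:
  fixes r :: real assumes "0 < r" "r \<le> 1/4"
  shows "2 * inverse (r ^ k) \<le> inverse (r ^ Suc k)"
proof -
  have "2 * r ^ Suc k \<le> r ^ k" by (rule pw[OF assms])
  then have "inverse (r ^ k) \<le> inverse (2 * r ^ Suc k)"
    using assms by (intro le_imp_inverse_le) auto
  then show ?thesis using assms by (simp add: field_simps)
qed

lemma natinv:
  fixes r :: real assumes "0 < r" "r \<le> 1/4"
  shows "real k \<le> inverse (r ^ k)"
proof -
  have "real (Suc k) * r ^ k \<le> 1" using nr_le1[of r k] assms by auto
  then have "real (Suc k) \<le> inverse (r ^ k)" using assms by (simp add: field_simps)
  then show ?thesis by simp
qed

lemma tailfin:
  fixes r t :: real assumes r: "0 < r" "r \<le> 1/4" and n: "q0 + R + 3 \<le> n"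
    and t: "t \<le> 2 * inverse (r ^ R) * r ^ Suc n"
  shows "r ^ Suc q0 < r ^ q0 - t"
proof -
  have "r ^ Suc n \<le> r ^ (q0 + 4 + R)" using r n by (intro power_decreasing) auto
  then have "t \<le> 2 * inverse (r ^ R) * r ^ (q0 + 4 + R)"
    using t r by (smt (verit) mult_left_mono inverse_nonnegative_iff_nonnegative zero_le_power)
  also have "\<dots> = 2 * r ^ q0 * r ^ 4" using r by (simp add: power_add field_simps)
  also have "\<dots> \<le> 2 * r ^ q0 * r"
    using r power_decreasing[of 1 4 r] by (intro mult_left_mono) auto
  finally have "t \<le> r ^ q0 * (2 * r)" by (simp add: mult_ac)
  moreover have "r ^ Suc q0 = r ^ q0 * r" by simp
  moreover have "r ^ q0 * (3 * r) < r ^ q0 * 1" using r by (intro mult_strict_left_mono) auto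
  ultimately show ?thesis by (simp add: algebra_simps)
qed

theorem theorem2p26:
  fixes \<rho> :: "real \<Rightarrow> real"
    and a :: "nat \<Rightarrow> real \<Rightarrow> complex"
    and c :: "real \<Rightarrow> complex"
  assumes "rho_gauge \<rho>"
    and "weakly_moderate \<rho> a"
    and "rmod \<rho> c"
  shows "\<exists>q::nat. sball \<rho> (\<lambda>e. \<rho> e ^ q) c \<subseteq> conv_set \<rho> a c"
proof -
  obtain Q R :: nat where evA: "\<forall>\<^sub>F e in at_right 0. \<forall>n. cmod (a n e) \<le> inverse (\<rho> e ^ (n * Q + R))"
    using assms(2) unfolding weakly_moderate_def by blast
  have e01: "\<forall>\<^sub>F e in at_right (0::real). e \<in> {0<..1}"
    unfolding eventually_at_right_field by (auto intro!: exI[of _ 1])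
  have rlim: "(\<rho> \<longlongrightarrow> 0) (at_right 0)" and rpos: "\<forall>e\<in>{0<..1}. \<rho> e \<in> {0<..1}"
    using assms(1) unfolding rho_gauge_def by auto
  have e14: "\<forall>\<^sub>F e in at_right (0::real). \<rho> e < 1/4"
    by (rule order_tendstoD(2)[OF rlim]) simp
  have evr: "\<forall>\<^sub>F e in at_right (0::real). 0 < \<rho> e \<and> \<rho> e \<le> 1/4"
    using e01 e14 by eventually_elim (use rpos in auto)
  define q where "q = Q + R + 3"
  define K where "K = Q + R"
  have refl: "req \<rho> x x" for x :: "real \<Rightarrow> complex"
    unfolding req_def rneg_def
  proof
    fix k :: nat show "\<forall>\<^sub>F e in at_right 0. norm (x e - x e) \<le> \<rho> e ^ k"
      using evr by eventually_elim auto
  qed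
  have "sball \<rho> (\<lambda>e. \<rho> e ^ q) c \<subseteq> conv_set \<rho> a c"
  proof
    fix z assume "z \<in> sball \<rho> (\<lambda>e. \<rho> e ^ q) c"
    then have zmod: "rmod \<rho> z" and "rlt \<rho> (\<lambda>e. cmod (z e - c e)) (\<lambda>e. \<rho> e ^ q)"
      unfolding sball_def by auto
    then obtain m where "\<forall>\<^sub>F e in at_right 0. \<rho> e ^ q - cmod (z e - c e) > \<rho> e ^ m"
      unfolding rlt_def by blast
    with evr have evz: "\<forall>\<^sub>F e in at_right 0. cmod (z e - c e) < \<rho> e ^ q"
    proof eventually_elim
      case (elim e)
      then have "0 < \<rho> e ^ m" by simp
      then show ?case using elim by linarith
    qed
    have evx: "\<forall>\<^sub>F e in at_right 0. cmod (z e - c e) \<le> \<rho> e ^ (Q + 2)"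
      using evz evr
    proof eventually_elim
      case (elim e)
      have "\<rho> e ^ q \<le> \<rho> e ^ (Q + 2)" using elim unfolding q_def by (intro power_decreasing) auto
      then show ?case using elim by simp
    qed
    define f where "f = (\<lambda>n e. a n e * (z e - c e) ^ n)"
    have evf: "\<forall>\<^sub>F e in at_right 0. \<forall>n. cmod (f n e) \<le> inverse (\<rho> e ^ R) * \<rho> e ^ n"
      using evr evA evx
    proof eventually_elim
      case (elim e)
      then show ?case unfolding f_def using core1[of "\<rho> e" "\<lambda>n. a n e" Q R] by auto
    qed
    have evg: "\<forall>\<^sub>F e in at_right 0. summable (\<lambda>n. f n e) \<and>
       cmod (\<Sum>n. f n e) \<le> inverse (\<rho> e ^ Suc R) \<and>
       (\<forall>N. cmod (\<Sum>n\<le>N. f n e) \<le> inverse (\<rho> e ^ Suc R)) \<and>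
       (\<forall>N. cmod ((\<Sum>n. f n e) - (\<Sum>n\<le>N. f n e)) \<le> 2 * inverse (\<rho> e ^ R) * \<rho> e ^ Suc N)"
      using evr evf
    proof eventually_elim
      case (elim e)
      have r: "0 < \<rho> e" "\<rho> e \<le> 1/2" using elim by auto
      note g = geo[OF r _ , of "inverse (\<rho> e ^ R)" "\<lambda>n. f n e"]
      have p: "2 * inverse (\<rho> e ^ R) \<le> inverse (\<rho> e ^ Suc R)" using elim by (intro pinv) auto
      have B: "\<And>n. cmod (f n e) \<le> inverse (\<rho> e ^ R) * \<rho> e ^ n" using elim by auto
      have C0: "0 \<le> inverse (\<rho> e ^ R)" using r by simp
      show ?case by (intro conjI allI geo(1,4)[OF r C0 B] order_trans[OF geo(2)[OF r C0 B] p] order_trans[OF geo(3)[OF r C0 B] p])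
    qed
    show "z \<in> conv_set \<rho> a c"
      unfolding conv_set_def
    proof (intro CollectI conjI)
      show "rmod \<rho> z" by fact
      show "rlt_ext \<rho> (\<lambda>e. cmod (z e - c e)) (rad a)"
        unfolding rlt_ext_def
      proof (intro exI[of _ q])
        show "\<forall>\<^sub>F e in at_right 0. ereal (cmod (z e - c e) + \<rho> e ^ q) < rad a e"
          using evr evA evz
        proof eventually_elim
          case (elim e)
          have rb: "ereal (\<rho> e ^ (Q + R)) \<le> rad a e"
            unfolding rad_def using rad_bound[of "\<rho> e" "\<lambda>n. a n e" Q R] elim by auto
          have h1: "2 * \<rho> e ^ Suc (Q + R + 2) \<le> \<rho> e ^ (Q + R + 2)" using elim by (intro pw) auto
          have h3: "\<rho> e ^ Suc (Q + R + 2) = \<rho> e ^ q" unfolding q_def by (simp add: numeral_3_eq_3)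
          have h2: "\<rho> e ^ (Q + R + 2) \<le> \<rho> e ^ (Q + R)" using elim by (intro power_decreasing) auto
          have "cmod (z e - c e) + \<rho> e ^ q < \<rho> e ^ (Q + R)"
            using elim h1 h2 h3 by linarith
          then have "ereal (cmod (z e - c e) + \<rho> e ^ q) < ereal (\<rho> e ^ (Q + R))" by simp
          then show ?case using rb by (rule order_less_le_trans)
        qed
      qed
      show "\<exists>z' c' a'. rmod \<rho> z' \<and> req \<rho> z' z \<and> rmod \<rho> c' \<and> req \<rho> c' c \<and>
        weakly_moderate \<rho> a' \<and> strong_eq \<rho> a' a \<and>
        hypersum_moderate \<rho> (\<lambda>n e. a' n e * (z' e - c' e) ^ n) \<and>
        (\<forall>\<^sub>F e in at_right 0. summable (\<lambda>n. a' n e * (z' e - c' e) ^ n)) \<and>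
        rmod \<rho> (\<lambda>e. \<Sum>n. a' n e * (z' e - c' e) ^ n) \<and>
        hyperlim \<rho> (hypersum (\<lambda>n e. a' n e * (z' e - c' e) ^ n))
                   (\<lambda>e. \<Sum>n. a' n e * (z' e - c' e) ^ n) \<and>
        (\<forall>zh. rmod \<rho> zh \<and> req \<rho> zh z \<longrightarrow>
           (\<forall>\<^sub>F e in at_right 0. summable (\<lambda>n. of_nat (Suc n) * a' (Suc n) e * (zh e - c' e) ^ n)) \<and>
           rmod \<rho> (\<lambda>e. \<Sum>n. of_nat (Suc n) * a' (Suc n) e * (zh e - c' e) ^ n))"
      proof (intro exI conjI)
        show "rmod \<rho> z" "req \<rho> z z" "rmod \<rho> c" "req \<rho> c c" "weakly_moderate \<rho> a"
          using zmod refl assms by auto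
        show "strong_eq \<rho> a a" unfolding strong_eq_def
        proof (intro allI)
          fix q r :: nat show "\<forall>\<^sub>F e in at_right 0. \<forall>n. cmod (a n e - a n e) \<le> \<rho> e ^ (n * q + r)"
            using evr by eventually_elim auto
        qed
        show "hypersum_moderate \<rho> (\<lambda>n e. a n e * (z e - c e) ^ n)"
          unfolding hypersum_moderate_def
        proof (intro allI impI)
          fix N :: "real \<Rightarrow> nat"
          show "rmod \<rho> (hypersum (\<lambda>n e. a n e * (z e - c e) ^ n) N)"
            unfolding rmod_def hypersum_def
          proof (intro exI[of _ "Suc R"])
            show "\<forall>\<^sub>F e in at_right 0. norm (\<Sum>n\<le>N e. a n e * (z e - c e) ^ n) \<le> inverse (\<rho> e ^ Suc R)"
              using evg by eventually_elim (simp add: f_def)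
          qed
        qed
        show "\<forall>\<^sub>F e in at_right 0. summable (\<lambda>n. a n e * (z e - c e) ^ n)"
          using evg by eventually_elim (simp add: f_def)
        show "rmod \<rho> (\<lambda>e. \<Sum>n. a n e * (z e - c e) ^ n)"
          unfolding rmod_def
        proof (intro exI[of _ "Suc R"])
          show "\<forall>\<^sub>F e in at_right 0. norm (\<Sum>n. a n e * (z e - c e) ^ n) \<le> inverse (\<rho> e ^ Suc R)"
            using evg by eventually_elim (simp add: f_def)
        qed
        show "hyperlim \<rho> (hypersum (\<lambda>n e. a n e * (z e - c e) ^ n))
                   (\<lambda>e. \<Sum>n. a n e * (z e - c e) ^ n)"
          unfolding hyperlim_def
        proof (intro allI)
          fix q0 :: nat
          define M0 where "M0 = q0 + R + 3"
          show "\<exists>M. hypernat \<rho> M \<and> (\<forall>N. hypernat \<rho> N \<and> rle \<rho> (\<lambda>e. real (M e)) (\<lambda>e. real (N e)) \<longrightarrow>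
            rlt \<rho> (\<lambda>e. cmod (hypersum (\<lambda>n e. a n e * (z e - c e) ^ n) N e - (\<Sum>n. a n e * (z e - c e) ^ n))) (\<lambda>e. \<rho> e ^ q0))"
          proof (intro exI[of _ "\<lambda>e. M0"] conjI allI impI)
            show "hypernat \<rho> (\<lambda>e. M0)" unfolding hypernat_def rmod_def
            proof (intro exI[of _ M0])
              show "\<forall>\<^sub>F e in at_right 0. norm (real M0) \<le> inverse (\<rho> e ^ M0)"
                using evr by eventually_elim (use natinv in auto)
            qed
          next
            fix N assume "hypernat \<rho> N \<and> rle \<rho> (\<lambda>e. real M0) (\<lambda>e. real (N e))"
            then obtain w where wn: "rneg \<rho> w" and wl: "\<forall>\<^sub>F e in at_right 0. real M0 \<le> real (N e) + w e"
              unfolding rle_def by blast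
            from wn have w1: "\<forall>\<^sub>F e in at_right 0. norm (w e) \<le> \<rho> e ^ 1" unfolding rneg_def by blast
            show "rlt \<rho> (\<lambda>e. cmod (hypersum (\<lambda>n e. a n e * (z e - c e) ^ n) N e - (\<Sum>n. a n e * (z e - c e) ^ n))) (\<lambda>e. \<rho> e ^ q0)"
              unfolding rlt_def
            proof (intro exI[of _ "Suc q0"])
              show "\<forall>\<^sub>F e in at_right 0. \<rho> e ^ q0 - cmod (hypersum (\<lambda>n e. a n e * (z e - c e) ^ n) N e - (\<Sum>n. a n e * (z e - c e) ^ n)) > \<rho> e ^ Suc q0"
                using evr evg wl w1
              proof eventually_elim
                case (elim e)
                have "real M0 < real (N e) + 1" using elim by auto
                then have MN: "q0 + R + 3 \<le> N e" unfolding M0_def by linarith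
                have t: "cmod (hypersum (\<lambda>n e. a n e * (z e - c e) ^ n) N e - (\<Sum>n. a n e * (z e - c e) ^ n))
                   \<le> 2 * inverse (\<rho> e ^ R) * \<rho> e ^ Suc (N e)"
                  using elim unfolding hypersum_def f_def by (simp add: norm_minus_commute)
                show ?case using tailfin[OF _ _ MN t] elim by auto
              qed
            qed
          qed
        qed
        show "\<forall>zh. rmod \<rho> zh \<and> req \<rho> zh z \<longrightarrow>
           (\<forall>\<^sub>F e in at_right 0. summable (\<lambda>n. of_nat (Suc n) * a (Suc n) e * (zh e - c e) ^ n)) \<and>
           rmod \<rho> (\<lambda>e. \<Sum>n. of_nat (Suc n) * a (Suc n) e * (zh e - c e) ^ n)"
        proof (intro allI impI)
          fix zh assume "rmod \<rho> zh \<and> req \<rho> zh z"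
          then have "\<forall>\<^sub>F e in at_right 0. norm (zh e - z e) \<le> \<rho> e ^ q"
            unfolding req_def rneg_def by blast
          with evr evz evA have evd: "\<forall>\<^sub>F e in at_right 0.
             summable (\<lambda>n. of_nat (Suc n) * a (Suc n) e * (zh e - c e) ^ n) \<and>
             cmod (\<Sum>n. of_nat (Suc n) * a (Suc n) e * (zh e - c e) ^ n) \<le> inverse (\<rho> e ^ Suc K)"
          proof eventually_elim
            case (elim e)
            have r: "0 < \<rho> e" "\<rho> e \<le> 1/2" using elim by auto
            have "cmod (zh e - c e) \<le> cmod (zh e - z e) + cmod (z e - c e)"
              using norm_triangle_ineq[of "zh e - z e" "z e - c e"] by simp
            also have "\<dots> \<le> 2 * \<rho> e ^ Suc (Q + R + 2)"
            proof -
              have h3: "\<rho> e ^ Suc (Q + R + 2) = \<rho> e ^ q" unfolding q_def by (simp add: numeral_3_eq_3)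
              show ?thesis using elim h3 by linarith
            qed
            also have "\<dots> \<le> \<rho> e ^ (Q + R + 2)" using elim by (intro pw) auto
            also have "\<dots> \<le> \<rho> e ^ (Q + 2)" using elim by (intro power_decreasing) auto
            finally have x: "cmod (zh e - c e) \<le> \<rho> e ^ (Q + 2)" .
            have B: "cmod (of_nat (Suc n) * a (Suc n) e * (zh e - c e) ^ n) \<le> inverse (\<rho> e ^ K) * \<rho> e ^ n" for n
              unfolding K_def using core2[of "\<rho> e" "\<lambda>n. a n e" Q R, OF r _ x] elim by auto
            have C0: "0 \<le> inverse (\<rho> e ^ K)" using r by simp
            have p: "2 * inverse (\<rho> e ^ K) \<le> inverse (\<rho> e ^ Suc K)" using elim by (intro pinv) auto
            show ?case by (intro conjI geo(1)[OF r C0 B] order_trans[OF geo(2)[OF r C0 B] p])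
          qed
          have S1: "\<forall>\<^sub>F e in at_right 0. summable (\<lambda>n. of_nat (Suc n) * a (Suc n) e * (zh e - c e) ^ n)"
            using evd by eventually_elim simp
          have S2: "rmod \<rho> (\<lambda>e. \<Sum>n. of_nat (Suc n) * a (Suc n) e * (zh e - c e) ^ n)"
            unfolding rmod_def
          proof (intro exI[of _ "Suc K"])
            show "\<forall>\<^sub>F e in at_right 0. norm (\<Sum>n. of_nat (Suc n) * a (Suc n) e * (zh e - c e) ^ n) \<le> inverse (\<rho> e ^ Suc K)"
              using evd by eventually_elim simp
          qed
          show "(\<forall>\<^sub>F e in at_right 0. summable (\<lambda>n. of_nat (Suc n) * a (Suc n) e * (zh e - c e) ^ n)) \<and>
           rmod \<rho> (\<lambda>e. \<Sum>n. of_nat (Suc n) * a (Suc n) e * (zh e - c e) ^ n)"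
            using S1 S2 by blast
        qed
      qed
    qed
  qed
  then show ?thesis by blast
qed

end
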